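(* Let $(g,f)$ be a strong sample mechanism on $\mathcal{G}^1_n$ and let $S\subseteq N$. For any nomination profiles $\mathbf{x},\mathbf{x}'\in\mathcal{G}^1_n$ with $\mathbf{x}_{-S}=\mathbf{x}'_{-S}$ (i.e., every vertex outside $S$ casts the same vote in $\mathbf{x}$ and $\mathbf{x}'$), if $S\setminus g(\mathbf{x})\neq\emptyset$ then $S\setminus g(\mathbf{x}')\neq\emptyset$.
   Context: $N=\{1,\dots,n\}$. $\mathcal{G}^1_n$ is the set of directed graphs on $N$ without self-loops in which every vertex has out-degree exactly $1$; a profile $\mathbf{x}$ is written as a tuple with $x_u\in N\setminus\{u\}$ the vertex nominated by $u$, and $(x'_u,\mathbf{x}_{-u})$ denotes the profile where $u$'s vote is changed to $x'_u$. $\mathbf{x}_{-S}$ denotes the graph obtained by deleting all outgoing edges of vertices in $S$. For a profile $\mathbf{x}$ and $S\subseteq N$, $W_S(\mathbf{x})=\{w\in N\setminus S:\ (v,w)\text{ is an edge for some } v\in S\}$. A sample mechanism $(g,f)$ first selects a sample set $g(\mathbf{x})$ using a function $g:\mathcal{G}^1_n\to 2^N\setminus\{\emptyset\}$ and then applies a (possibly randomized) selection rule $f$ whose range is restricted to $W_{g(\mathbf{x})}(\mathbf{x})$ (no winner if this set is empty). It is a strong sample mechanism if $g(x'_u,\mathbf{x}_{-u})=g(\mathbf{x})$ for all $\mathbf{x}\in\mathcal{G}^1_n$, all $u\in g(\mathbf{x})$ and all $x'_u\in N\setminus\{u\}$. *)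

theory Defs
  imports Main
begin

text \<open>Profiles in G^1_n: each vertex u in N = {1..n} nominates x u in N - {u}.
  Profiles are represented extensionally (value 0 outside N) so that each
  graph corresponds to exactly one function.\<close>
definition profiles :: "nat \<Rightarrow> (nat \<Rightarrow> nat) set" where
  "profiles n = {x. (\<forall>u\<in>{1..n}. x u \<in> {1..n} - {u}) \<and> (\<forall>u. u \<notin> {1..n} \<longrightarrow> x u = 0)}"

definition sample_fun :: "nat \<Rightarrow> ((nat \<Rightarrow> nat) \<Rightarrow> nat set) \<Rightarrow> bool" where
  "sample_fun n g \<longleftrightarrow> (\<forall>x\<in>profiles n. g x \<noteq> {} \<and> g x \<subseteq> {1..n})"

text \<open>Strong sample mechanism condition (only concerns g).\<close>
definition strong_sample :: "nat \<Rightarrow> ((nat \<Rightarrow> nat) \<Rightarrow> nat set) \<Rightarrow> bool" where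
  "strong_sample n g \<longleftrightarrow> sample_fun n g \<and>
     (\<forall>x\<in>profiles n. \<forall>u\<in>g x. \<forall>v\<in>{1..n} - {u}. g (x(u := v)) = g x)"

end

theory Submission
  imports Defs
begin

lemma step_lemma:
  assumes ss: "strong_sample n g"
    and S: "S \<subseteq> {1..n}"
    and x: "x \<in> profiles n" and x': "x' \<in> profiles n"
    and sub: "S \<subseteq> g x'"
    and T: "T \<subseteq> S"
  shows "(\<lambda>u. if u \<in> T then x u else x' u) \<in> profiles n \<and>
         g (\<lambda>u. if u \<in> T then x u else x' u) = g x'"
proof -
  have finS: "finite S" by (rule finite_subset[OF S]) simp
  have fin: "finite T" by (rule finite_subset[OF T finS])
  from fin T show ?thesis
  proof (induction T rule: finite_induct)
    case empty
    then show ?case using x' by simp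
  next
    case (insert a T)
    let ?y = "\<lambda>u. if u \<in> T then x u else x' u"
    have IH: "?y \<in> profiles n" "g ?y = g x'" using insert by auto
    have aS: "a \<in> S" using insert by auto
    have an: "a \<in> {1..n}" using aS S by auto
    have xa: "x a \<in> {1..n} - {a}" using x an unfolding profiles_def by auto
    have eq: "(\<lambda>u. if u \<in> insert a T then x u else x' u) = ?y(a := x a)"
      by auto
    have ag: "a \<in> g ?y" using IH aS sub by auto
    have g1: "g (?y(a := x a)) = g ?y"
      using ss IH(1) ag xa unfolding strong_sample_def by blast
    have p1: "?y(a := x a) \<in> profiles n"
      using IH(1) xa an unfolding profiles_def by auto
    show ?case using eq g1 p1 IH by simp
  qed
qed

theorem mainTheorem2:
  fixes n :: nat and g :: "(nat \<Rightarrow> nat) \<Rightarrow> nat set"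
    and S :: "nat set" and x x' :: "nat \<Rightarrow> nat"
  assumes "strong_sample n g"
    and "S \<subseteq> {1..n}"
    and "x \<in> profiles n" and "x' \<in> profiles n"
    and "\<forall>u\<in>{1..n} - S. x u = x' u"
    and "S - g x \<noteq> {}"
  shows "S - g x' \<noteq> {}"
proof
  assume "S - g x' = {}"
  then have sub: "S \<subseteq> g x'" by blast
  have eq: "(\<lambda>u. if u \<in> S then x u else x' u) = x"
  proof
    fix u
    show "(if u \<in> S then x u else x' u) = x u"
    proof (cases "u \<in> S")
      case False
      show ?thesis
      proof (cases "u \<in> {1..n}")
        case True then show ?thesis using False assms(5) by auto
      next
        case F2: False
        then show ?thesis using False assms(3,4) unfolding profiles_def by auto
      qed
    qed simp
  qed
  have "g (\<lambda>u. if u \<in> S then x u else x' u) = g x'"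
    using step_lemma[of n g S x x' S] assms(1-4) sub by simp
  then have "g x = g x'" using eq by simp
  then show False using assms(6) sub by blast
qed

end
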